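(* Let $S$ be an $E$-unitary inverse semigroup, $A$ a semilattice of groups, and $\Lambda=(\alpha,\lambda,f)$, $\Lambda'=(\alpha',\lambda',f')$ Sieben twisted $S$-module structures on $A$. If $\Lambda$ is equivalent to $\Lambda'$, then the corresponding twisted partial actions $\Theta=\Theta^\Lambda$ and $\Theta'=\Theta^{\Lambda'}$ of $\mathcal G(S)$ on $A$ are equivalent.
   Context: A semilattice of groups is an inverse semigroup $A$ with central idempotents; $A_e=\{a: aa^{-1}=a^{-1}a=e\}$. $\mathcal G(S)=S/\sigma$, $\sigma$ the minimum group congruence; $E$-unitary: $e\le s$, $e\in E(S)$ imply $s\in E(S)$. A twisted $S$-module structure $(\alpha,\lambda,f)$: $\alpha:E(S)\to E(A)$ isomorphism, $\lambda_s$ relatively invertible endomorphisms of $A$ (there are $\bar\varphi$, $e_\varphi\in E(A)$ with $\bar\varphi\varphi(a)=e_\varphi a$, $\varphi\bar\varphi(a)=\varphi(e_\varphi)a$, $e_\varphi$ identity of $\bar\varphi(A)$, $\varphi(e_\varphi)$ identity of $\varphi(A)$), $f(s,t)\in A_{\alpha(stt^{-1}s^{-1})}$, with (i) $\lambda_e(a)=\alpha(e)a$; (ii) $\lambda_s(\alpha(e))=\alpha(ses^{-1})$; (iii) $\lambda_s\lambda_t(a)=f(s,t)\lambda_{st}(a)f(s,t)^{-1}$; (iv) $f(se,e)=\alpha(ses^{-1})$, $f(e,es)=\alpha(ess^{-1})$; (v) $\lambda_s(f(t,u))f(s,tu)=f(s,t)f(st,u)$; Sieben: also $f(s,e)=\alpha(ses^{-1})$,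 $f(e,s)=\alpha(ess^{-1})$. Equivalence of structures: $\alpha'=\alpha$ and there is $g:S\to A$, $g(s)\in A_{\alpha(ss^{-1})}$, with $\lambda'_s(a)=g(s)\lambda_s(a)g(s)^{-1}$ and $f'(s,t)g(st)=g(s)\lambda_s(g(t))f(s,t)$. $\Theta^\Lambda=(\theta,w)$: for $x\in\mathcal G(S)$, $D_x=\bigsqcup_{s\in x}A_{\alpha(ss^{-1})}$; $\theta_x(a)=\lambda_s(a)$ for $a\in D_{x^{-1}}$ with $s\in x$ the unique element with $\alpha(s^{-1}s)=aa^{-1}$; $w_{x,y}a=f(s,s^{-1}t)a$, $aw_{x,y}=af(s,s^{-1}t)$ for $a\in D_xD_{xy}$ with $s\in x$, $t\in xy$ unique such that $\alpha(ss^{-1})=\alpha(tt^{-1})=aa^{-1}$; this is a twisted partial action. Multipliers of a semigroup $T$: pairs $(L,R)$ of maps with $L(st)=L(s)t$, $R(st)=sR(t)$, $sL(t)=R(s)t$, written $ws$, $sw$; monoid $\mathcal M(T)$ with unit group $\mathcal U(\mathcal M(T))$. Two twisted partial actions $(\theta,w)$, $(\theta',w')$ of a group on $A$ (with domains $D_x$, $D'_x$) are equivalent if $D'_x=D_x$ and there exist $\varepsilon_x\in\mathcal U(\mathcal M(D_x))$ with $\theta'_x(s)=\varepsilon_x\theta_x(s)\varepsilon_x^{-1}$ for $s\in D_{x^{-1}}$ and $\theta'_x(s)w'_{x,y}\varepsilon_{xy}=\varepsilon_x\theta_x(s\varepsilon_y)w_{x,y}$ for $s\in D_{x^{-1}}D_y$.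 *)

theory Defs
  imports Main
begin

definition is_inverse_semigroup :: "('s \<Rightarrow> 's \<Rightarrow> 's) \<Rightarrow> bool" where
  "is_inverse_semigroup m \<longleftrightarrow>
     (\<forall>a b c. m (m a b) c = m a (m b c)) \<and>
     (\<forall>s. \<exists>!t. m (m s t) s = s \<and> m (m t s) t = t)"

definition sinv :: "('s \<Rightarrow> 's \<Rightarrow> 's) \<Rightarrow> 's \<Rightarrow> 's" where
  "sinv m s = (THE t. m (m s t) s = s \<and> m (m t s) t = t)"

definition idems :: "('s \<Rightarrow> 's \<Rightarrow> 's) \<Rightarrow> 's set" where
  "idems m = {e. m e e = e}"

definition semilattice_of_groups :: "('a \<Rightarrow> 'a \<Rightarrow> 'a) \<Rightarrow> bool" where
  "semilattice_of_groups m \<longleftrightarrow> is_inverse_semigroup m \<and> (\<forall>e\<in>idems m. \<forall>a. m e a = m a e)"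

definition grp_comp :: "('a \<Rightarrow> 'a \<Rightarrow> 'a) \<Rightarrow> 'a \<Rightarrow> 'a set" where
  "grp_comp m e = {a. m a (sinv m a) = e \<and> m (sinv m a) a = e}"

definition nat_le :: "('s \<Rightarrow> 's \<Rightarrow> 's) \<Rightarrow> 's \<Rightarrow> 's \<Rightarrow> bool" where
  "nat_le m s t \<longleftrightarrow> (\<exists>e\<in>idems m. s = m e t)"

definition E_unitary :: "('s \<Rightarrow> 's \<Rightarrow> 's) \<Rightarrow> bool" where
  "E_unitary m \<longleftrightarrow> is_inverse_semigroup m \<and>
     (\<forall>e s. e \<in> idems m \<and> nat_le m e s \<longrightarrow> s \<in> idems m)"

definition is_congruence :: "('s \<Rightarrow> 's \<Rightarrow> 's) \<Rightarrow> ('s \<times> 's) set \<Rightarrow> bool" where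
  "is_congruence m R \<longleftrightarrow> equiv UNIV R \<and>
     (\<forall>a b c. (a, b) \<in> R \<longrightarrow> (m c a, m c b) \<in> R \<and> (m a c, m b c) \<in> R)"

definition group_congruence :: "('s \<Rightarrow> 's \<Rightarrow> 's) \<Rightarrow> ('s \<times> 's) set \<Rightarrow> bool" where
  "group_congruence m R \<longleftrightarrow> is_congruence m R \<and>
     (\<exists>u. \<forall>s. (m u s, s) \<in> R \<and> (m s u, s) \<in> R \<and> (\<exists>t. (m s t, u) \<in> R \<and> (m t s, u) \<in> R))"

definition min_group_cong :: "('s \<Rightarrow> 's \<Rightarrow> 's) \<Rightarrow> ('s \<times> 's) set" where
  "min_group_cong m = \<Inter> {R. group_congruence m R}"

definition GS :: "('s \<Rightarrow> 's \<Rightarrow> 's) \<Rightarrow> 's set set" where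
  "GS m = UNIV // min_group_cong m"

definition sclass :: "('s \<Rightarrow> 's \<Rightarrow> 's) \<Rightarrow> 's \<Rightarrow> 's set" where
  "sclass m s = min_group_cong m `` {s}"

definition GS_mult :: "('s \<Rightarrow> 's \<Rightarrow> 's) \<Rightarrow> 's set \<Rightarrow> 's set \<Rightarrow> 's set" where
  "GS_mult m x y = sclass m (m (SOME s. s \<in> x) (SOME t. t \<in> y))"

definition GS_inv :: "('s \<Rightarrow> 's \<Rightarrow> 's) \<Rightarrow> 's set \<Rightarrow> 's set" where
  "GS_inv m x = sclass m (sinv m (SOME s. s \<in> x))"

definition endo :: "('a \<Rightarrow> 'a \<Rightarrow> 'a) \<Rightarrow> ('a \<Rightarrow> 'a) \<Rightarrow> bool" where
  "endo m \<phi> \<longleftrightarrow> (\<forall>a b. \<phi> (m a b) = m (\<phi> a) (\<phi> b))"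

definition is_identity_of :: "('a \<Rightarrow> 'a \<Rightarrow> 'a) \<Rightarrow> 'a \<Rightarrow> 'a set \<Rightarrow> bool" where
  "is_identity_of m e B \<longleftrightarrow> e \<in> B \<and> (\<forall>b\<in>B. m e b = b \<and> m b e = b)"

definition rel_invertible :: "('a \<Rightarrow> 'a \<Rightarrow> 'a) \<Rightarrow> ('a \<Rightarrow> 'a) \<Rightarrow> bool" where
  "rel_invertible m \<phi> \<longleftrightarrow> endo m \<phi> \<and>
     (\<exists>\<phi>b e. endo m \<phi>b \<and> e \<in> idems m \<and>
        (\<forall>a. \<phi>b (\<phi> a) = m e a) \<and> (\<forall>a. \<phi> (\<phi>b a) = m (\<phi> e) a) \<and>
        is_identity_of m e (range \<phi>b) \<and> is_identity_of m (\<phi> e) (range \<phi>))"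

text \<open>Sieben twisted S-module structure $(\alpha,\lambda,f)$ on $A$
  (conditions (i)--(v) together with Sieben's extra normalisation).\<close>
definition sieben_twisted_module ::
  "('s \<Rightarrow> 's \<Rightarrow> 's) \<Rightarrow> ('a \<Rightarrow> 'a \<Rightarrow> 'a) \<Rightarrow> ('s \<Rightarrow> 'a) \<Rightarrow> ('s \<Rightarrow> 'a \<Rightarrow> 'a) \<Rightarrow> ('s \<Rightarrow> 's \<Rightarrow> 'a) \<Rightarrow> bool"
where
  "sieben_twisted_module mS mA \<alpha> lam f \<longleftrightarrow>
     bij_betw \<alpha> (idems mS) (idems mA) \<and>
     (\<forall>e\<in>idems mS. \<forall>e'\<in>idems mS. \<alpha> (mS e e') = mA (\<alpha> e) (\<alpha> e')) \<and>
     (\<forall>s. rel_invertible mA (lam s)) \<and>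
     (\<forall>s t. f s t \<in> grp_comp mA (\<alpha> (mS (mS s t) (mS (sinv mS t) (sinv mS s))))) \<and>
     (\<forall>e\<in>idems mS. \<forall>a. lam e a = mA (\<alpha> e) a) \<and>
     (\<forall>s. \<forall>e\<in>idems mS. lam s (\<alpha> e) = \<alpha> (mS (mS s e) (sinv mS s))) \<and>
     (\<forall>s t a. lam s (lam t a) = mA (mA (f s t) (lam (mS s t) a)) (sinv mA (f s t))) \<and>
     (\<forall>s. \<forall>e\<in>idems mS. f (mS s e) e = \<alpha> (mS (mS s e) (sinv mS s)) \<and>
                       f e (mS e s) = \<alpha> (mS (mS e s) (sinv mS s))) \<and>
     (\<forall>s t u. mA (lam s (f t u)) (f s (mS t u)) = mA (f s t) (f (mS s t) u)) \<and>
     (\<forall>s. \<forall>e\<in>idems mS. f s e = \<alpha> (mS (mS s e) (sinv mS s)) \<and>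
                       f e s = \<alpha> (mS (mS e s) (sinv mS s)))"

definition equiv_twisted_modules ::
  "('s \<Rightarrow> 's \<Rightarrow> 's) \<Rightarrow> ('a \<Rightarrow> 'a \<Rightarrow> 'a) \<Rightarrow>
   ('s \<Rightarrow> 'a) \<Rightarrow> ('s \<Rightarrow> 'a \<Rightarrow> 'a) \<Rightarrow> ('s \<Rightarrow> 's \<Rightarrow> 'a) \<Rightarrow>
   ('s \<Rightarrow> 'a) \<Rightarrow> ('s \<Rightarrow> 'a \<Rightarrow> 'a) \<Rightarrow> ('s \<Rightarrow> 's \<Rightarrow> 'a) \<Rightarrow> bool"
where
  "equiv_twisted_modules mS mA \<alpha> lam f \<alpha>' lam' f' \<longleftrightarrow>
     (\<forall>e\<in>idems mS. \<alpha>' e = \<alpha> e) \<and>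
     (\<exists>g. (\<forall>s. g s \<in> grp_comp mA (\<alpha> (mS s (sinv mS s)))) \<and>
          (\<forall>s a. lam' s a = mA (mA (g s) (lam s a)) (sinv mA (g s))) \<and>
          (\<forall>s t. mA (f' s t) (g (mS s t)) = mA (mA (g s) (lam s (g t))) (f s t)))"

definition Dom :: "('s \<Rightarrow> 's \<Rightarrow> 's) \<Rightarrow> ('a \<Rightarrow> 'a \<Rightarrow> 'a) \<Rightarrow> ('s \<Rightarrow> 'a) \<Rightarrow> 's set \<Rightarrow> 'a set" where
  "Dom mS mA \<alpha> x = (\<Union>s\<in>x. grp_comp mA (\<alpha> (mS s (sinv mS s))))"

definition theta ::
  "('s \<Rightarrow> 's \<Rightarrow> 's) \<Rightarrow> ('a \<Rightarrow> 'a \<Rightarrow> 'a) \<Rightarrow> ('s \<Rightarrow> 'a) \<Rightarrow> ('s \<Rightarrow> 'a \<Rightarrow> 'a) \<Rightarrow> 's set \<Rightarrow> 'a \<Rightarrow> 'a"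
where
  "theta mS mA \<alpha> lam x a =
     lam (THE s. s \<in> x \<and> \<alpha> (mS (sinv mS s) s) = mA a (sinv mA a)) a"

text \<open>A multiplier is represented as the pair (left action, right action).\<close>
definition wmult ::
  "('s \<Rightarrow> 's \<Rightarrow> 's) \<Rightarrow> ('a \<Rightarrow> 'a \<Rightarrow> 'a) \<Rightarrow> ('s \<Rightarrow> 'a) \<Rightarrow> ('s \<Rightarrow> 's \<Rightarrow> 'a) \<Rightarrow> 's set \<Rightarrow> 's set
     \<Rightarrow> ('a \<Rightarrow> 'a) \<times> ('a \<Rightarrow> 'a)"
where
  "wmult mS mA \<alpha> f x y =
     (let fv = (\<lambda>a. let s = (THE s. s \<in> x \<and> \<alpha> (mS s (sinv mS s)) = mA a (sinv mA a));
                       t = (THE t. t \<in> GS_mult mS x y \<and> \<alpha> (mS t (sinv mS t)) = mA a (sinv mA a))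
                   in f s (mS (sinv mS s) t))
      in (\<lambda>a. mA (fv a) a, \<lambda>a. mA a (fv a)))"

definition setmul :: "('a \<Rightarrow> 'a \<Rightarrow> 'a) \<Rightarrow> 'a set \<Rightarrow> 'a set \<Rightarrow> 'a set" where
  "setmul m B C = {m b c | b c. b \<in> B \<and> c \<in> C}"

definition is_multiplier :: "('a \<Rightarrow> 'a \<Rightarrow> 'a) \<Rightarrow> 'a set \<Rightarrow> ('a \<Rightarrow> 'a) \<times> ('a \<Rightarrow> 'a) \<Rightarrow> bool" where
  "is_multiplier m T w \<longleftrightarrow>
     (\<forall>s\<in>T. fst w s \<in> T \<and> snd w s \<in> T) \<and>
     (\<forall>s\<in>T. \<forall>t\<in>T. fst w (m s t) = m (fst w s) t \<and> snd w (m s t) = m s (snd w t) \<and>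
                     m s (fst w t) = m (snd w s) t)"

text \<open>$w$ is a unit of $\mathcal M(T)$ with inverse $w'$ (products of multipliers
  compose left actions and right actions; the identity is (id,id); equality on $T$).\<close>
definition is_unit_multiplier_with_inv ::
  "('a \<Rightarrow> 'a \<Rightarrow> 'a) \<Rightarrow> 'a set \<Rightarrow> ('a \<Rightarrow> 'a) \<times> ('a \<Rightarrow> 'a) \<Rightarrow> ('a \<Rightarrow> 'a) \<times> ('a \<Rightarrow> 'a) \<Rightarrow> bool"
where
  "is_unit_multiplier_with_inv m T w w' \<longleftrightarrow>
     is_multiplier m T w \<and> is_multiplier m T w' \<and>
     (\<forall>s\<in>T. fst w (fst w' s) = s \<and> fst w' (fst w s) = s \<and>
            snd w (snd w' s) = s \<and> snd w' (snd w s) = s)"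

definition equiv_tpa ::
  "('a \<Rightarrow> 'a \<Rightarrow> 'a) \<Rightarrow> 'g set \<Rightarrow> ('g \<Rightarrow> 'g \<Rightarrow> 'g) \<Rightarrow> ('g \<Rightarrow> 'g) \<Rightarrow>
   ('g \<Rightarrow> 'a set) \<Rightarrow> ('g \<Rightarrow> 'a \<Rightarrow> 'a) \<Rightarrow> ('g \<Rightarrow> 'g \<Rightarrow> ('a \<Rightarrow> 'a) \<times> ('a \<Rightarrow> 'a)) \<Rightarrow>
   ('g \<Rightarrow> 'a set) \<Rightarrow> ('g \<Rightarrow> 'a \<Rightarrow> 'a) \<Rightarrow> ('g \<Rightarrow> 'g \<Rightarrow> ('a \<Rightarrow> 'a) \<times> ('a \<Rightarrow> 'a)) \<Rightarrow> bool"
where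
  "equiv_tpa mA G gm gi D th w D' th' w' \<longleftrightarrow>
     (\<forall>x\<in>G. D' x = D x) \<and>
     (\<exists>\<epsilon> \<epsilon>i. \<forall>x\<in>G.
        is_unit_multiplier_with_inv mA (D x) (\<epsilon> x) (\<epsilon>i x) \<and>
        (\<forall>s\<in>D (gi x). th' x s = snd (\<epsilon>i x) (fst (\<epsilon> x) (th x s))) \<and>
        (\<forall>y\<in>G. \<forall>s\<in>setmul mA (D (gi x)) (D y).
           snd (\<epsilon> (gm x y)) (snd (w' x y) (th' x s)) =
           fst (\<epsilon> x) (snd (w x y) (th x (snd (\<epsilon> y) s)))))"

end

theory Submission
  imports Defs
begin

locale inv_sg =
  fixes m :: "'a \<Rightarrow> 'a \<Rightarrow> 'a" (infixl "\<cdot>" 70)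
  assumes isg: "is_inverse_semigroup m"
begin

abbreviation iv where "iv \<equiv> sinv m"
abbreviation E where "E \<equiv> idems m"

lemma assoc: "(a \<cdot> b) \<cdot> c = a \<cdot> (b \<cdot> c)"
  using isg unfolding is_inverse_semigroup_def by blast

lemma inv_ex: "(s \<cdot> iv s) \<cdot> s = s \<and> (iv s \<cdot> s) \<cdot> iv s = iv s"
proof -
  have "\<exists>!t. (s \<cdot> t) \<cdot> s = s \<and> (t \<cdot> s) \<cdot> t = t" using isg unfolding is_inverse_semigroup_def by blast
  from theI'[OF this] show ?thesis unfolding sinv_def .
qed

lemma inv1[simp]: "s \<cdot> (iv s \<cdot> s) = s" using inv_ex assoc by metis
lemma inv2[simp]: "iv s \<cdot> (s \<cdot> iv s) = iv s" using inv_ex assoc by metis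
lemma inv1'[simp]: "s \<cdot> (iv s \<cdot> (s \<cdot> z)) = s \<cdot> z" by (metis inv1 assoc)
lemma inv2'[simp]: "iv s \<cdot> (s \<cdot> (iv s \<cdot> z)) = iv s \<cdot> z" by (metis inv2 assoc)

lemma inv_uniq: assumes "s \<cdot> (t \<cdot> s) = s" "t \<cdot> (s \<cdot> t) = t" shows "t = iv s"
proof -
  have "\<exists>!t. (s \<cdot> t) \<cdot> s = s \<and> (t \<cdot> s) \<cdot> t = t" using isg unfolding is_inverse_semigroup_def by blast
  moreover have "(s \<cdot> t) \<cdot> s = s \<and> (t \<cdot> s) \<cdot> t = t" using assms assoc by metis
  moreover have "(s \<cdot> iv s) \<cdot> s = s \<and> (iv s \<cdot> s) \<cdot> iv s = iv s" using inv_ex by blast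
  ultimately show ?thesis by blast
qed

lemma idems_iff: "e \<in> E \<longleftrightarrow> e \<cdot> e = e" unfolding idems_def by simp

lemma inv_inv[simp]: "iv (iv s) = s"
  by (rule inv_uniq[symmetric]) simp_all

lemma idem_inv: "e \<in> E \<Longrightarrow> iv e = e"
  by (rule inv_uniq[symmetric]) (simp_all add: idems_iff)

lemma idem_mult: assumes e: "e \<in> E" and f: "f \<in> E" shows "e \<cdot> f \<in> E"
proof -
  have ee: "e \<cdot> e = e" and ff: "f \<cdot> f = f" using e f idems_iff by auto
  define x where "x = iv (e \<cdot> f)"
  have 1: "e \<cdot> (f \<cdot> (x \<cdot> (e \<cdot> f))) = e \<cdot> f" unfolding x_def by (metis inv1 assoc)
  have 2: "x \<cdot> (e \<cdot> (f \<cdot> x)) = x" unfolding x_def by (metis inv2 assoc)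
  have "f \<cdot> x \<cdot> e = iv (e \<cdot> f)"
  proof (rule inv_uniq)
    have "(e \<cdot> f) \<cdot> ((f \<cdot> x \<cdot> e) \<cdot> (e \<cdot> f)) = e \<cdot> ((f \<cdot> f) \<cdot> (x \<cdot> ((e \<cdot> e) \<cdot> f)))" by (simp add: assoc)
    also have "\<dots> = e \<cdot> f" using ee ff 1 by simp
    finally show "(e \<cdot> f) \<cdot> ((f \<cdot> x \<cdot> e) \<cdot> (e \<cdot> f)) = e \<cdot> f" .
    have "(f \<cdot> x \<cdot> e) \<cdot> ((e \<cdot> f) \<cdot> (f \<cdot> x \<cdot> e)) = f \<cdot> ((x \<cdot> ((e \<cdot> e) \<cdot> ((f \<cdot> f) \<cdot> x))) \<cdot> e)" by (simp add: assoc)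
    also have "\<dots> = f \<cdot> x \<cdot> e" using ee ff 2 by (simp add: assoc)
    finally show "(f \<cdot> x \<cdot> e) \<cdot> ((e \<cdot> f) \<cdot> (f \<cdot> x \<cdot> e)) = f \<cdot> x \<cdot> e" .
  qed
  hence fxe: "f \<cdot> x \<cdot> e = x" unfolding x_def by simp
  have "x \<cdot> x = f \<cdot> (x \<cdot> (e \<cdot> (f \<cdot> x))) \<cdot> e" using fxe by (metis assoc)
  also have "\<dots> = x" using 2 fxe by simp
  finally have "x \<in> E" using idems_iff by simp
  hence "iv x = x" by (rule idem_inv)
  hence "e \<cdot> f = x" unfolding x_def by simp
  thus ?thesis using \<open>x \<in> E\<close> by simp
qed

lemma idem_comm: assumes e: "e \<in> E" and f: "f \<in> E" shows "e \<cdot> f = f \<cdot> e"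
proof -
  have ee: "e \<cdot> e = e" and ff: "f \<cdot> f = f" using e f idems_iff by auto
  have ef: "e \<cdot> f \<in> E" using idem_mult e f .
  have "f \<cdot> e = iv (e \<cdot> f)"
  proof (rule inv_uniq)
    show "e \<cdot> f \<cdot> (f \<cdot> e \<cdot> (e \<cdot> f)) = e \<cdot> f" using ee ff ef idems_iff by (metis assoc)
    show "f \<cdot> e \<cdot> (e \<cdot> f \<cdot> (f \<cdot> e)) = f \<cdot> e" using ee ff idem_mult[OF f e] idems_iff by (metis assoc)
  qed
  thus ?thesis using idem_inv[OF ef] by simp
qed

lemma idem_lcomm: "e \<in> E \<Longrightarrow> f \<in> E \<Longrightarrow> e \<cdot> (f \<cdot> z) = f \<cdot> (e \<cdot> z)"
  by (metis assoc idem_comm)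

lemma idem_sq: "e \<in> E \<Longrightarrow> e \<cdot> e = e" by (simp add: idems_iff)
lemma idem_sq': "e \<in> E \<Longrightarrow> e \<cdot> (e \<cdot> z) = e \<cdot> z" by (metis idem_sq assoc)

lemma rid[simp]: "s \<cdot> iv s \<in> E" unfolding idems_iff by (metis inv1' assoc)
lemma lid[simp]: "iv s \<cdot> s \<in> E" unfolding idems_iff by (metis inv1 assoc)


lemma lcomm_l: "e \<in> E \<Longrightarrow> e \<cdot> (iv c \<cdot> (c \<cdot> z)) = iv c \<cdot> (c \<cdot> (e \<cdot> z))"
  using idem_lcomm[OF _ lid] assoc by metis
lemma lcomm_r: "e \<in> E \<Longrightarrow> e \<cdot> (c \<cdot> (iv c \<cdot> z)) = c \<cdot> (iv c \<cdot> (e \<cdot> z))"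
  using idem_lcomm[OF _ rid] assoc by metis
lemma lcomm_l0: "e \<in> E \<Longrightarrow> e \<cdot> (iv c \<cdot> c) = iv c \<cdot> (c \<cdot> e)"
  using idem_comm[OF _ lid] assoc by metis
lemma lcomm_r0: "e \<in> E \<Longrightarrow> e \<cdot> (c \<cdot> iv c) = c \<cdot> (iv c \<cdot> e)"
  using idem_comm[OF _ rid] assoc by metis

lemma inv_mult: "iv (s \<cdot> t) = iv t \<cdot> iv s"
proof (rule inv_uniq[symmetric])
  have c: "t \<cdot> iv t \<cdot> (iv s \<cdot> s) = iv s \<cdot> s \<cdot> (t \<cdot> iv t)" using idem_comm by simp
  show "s \<cdot> t \<cdot> (iv t \<cdot> iv s \<cdot> (s \<cdot> t)) = s \<cdot> t"
  proof -
    have "s \<cdot> t \<cdot> (iv t \<cdot> iv s \<cdot> (s \<cdot> t)) = s \<cdot> ((t \<cdot> iv t \<cdot> (iv s \<cdot> s)) \<cdot> t)" by (simp add: assoc)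
    also have "\<dots> = s \<cdot> t" unfolding c by (simp add: assoc)
    finally show ?thesis .
  qed
  show "iv t \<cdot> iv s \<cdot> (s \<cdot> t \<cdot> (iv t \<cdot> iv s)) = iv t \<cdot> iv s"
  proof -
    have "iv t \<cdot> iv s \<cdot> (s \<cdot> t \<cdot> (iv t \<cdot> iv s)) = iv t \<cdot> ((iv s \<cdot> s \<cdot> (t \<cdot> iv t)) \<cdot> iv s)" by (simp add: assoc)
    also have "\<dots> = iv t \<cdot> iv s" unfolding c[symmetric] by (simp add: assoc)
    finally show ?thesis .
  qed
qed

lemma endo_inv: assumes "endo m \<phi>" shows "\<phi> (iv a) = iv (\<phi> a)"
proof (rule inv_uniq)
  have h: "\<And>a b. \<phi> (a \<cdot> b) = \<phi> a \<cdot> \<phi> b" using assms unfolding endo_def by blast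
  show "\<phi> a \<cdot> (\<phi> (iv a) \<cdot> \<phi> a) = \<phi> a" by (metis h inv1)
  show "\<phi> (iv a) \<cdot> (\<phi> a \<cdot> \<phi> (iv a)) = \<phi> (iv a)" by (metis h inv2)
qed

lemma endo_idem: "endo m \<phi> \<Longrightarrow> e \<in> E \<Longrightarrow> \<phi> e \<in> E"
  unfolding endo_def idems_iff by metis

end

locale clifford = inv_sg +
  assumes central: "e \<in> E \<Longrightarrow> e \<cdot> a = a \<cdot> e"
begin

lemma rl: "a \<cdot> iv a = iv a \<cdot> a"
proof -
  let ?e = "a \<cdot> iv a" and ?f = "iv a \<cdot> a"
  have ea: "?e \<cdot> a = a" by (simp add: assoc)
  have af: "a \<cdot> ?f = a" by simp
  have 1: "?e = ?f \<cdot> ?e"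
  proof -
    have "?e = a \<cdot> ?f \<cdot> iv a" by (simp add: assoc)
    also have "\<dots> = ?f \<cdot> a \<cdot> iv a" using central[OF lid[of a]] by simp
    finally show ?thesis by (simp add: assoc)
  qed
  have 2: "?f = ?e \<cdot> ?f"
  proof -
    have "?f = iv a \<cdot> ?e \<cdot> a" by (simp add: assoc)
    also have "\<dots> = ?e \<cdot> iv a \<cdot> a" using central[OF rid[of a]] by simp
    finally show ?thesis by (simp add: assoc)
  qed
  show ?thesis using 1 2 idem_comm[OF rid lid] by simp
qed

lemma grp_comp_iff: "a \<in> grp_comp m e \<longleftrightarrow> a \<cdot> iv a = e"
  unfolding grp_comp_def using rl by auto

lemma gc_idem: "a \<in> grp_comp m e \<Longrightarrow> e \<in> E"
  using grp_comp_iff by auto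

lemma gc_l: "a \<in> grp_comp m e \<Longrightarrow> e \<cdot> a = a"
  using grp_comp_iff by (auto simp: assoc)
lemma gc_r: "a \<in> grp_comp m e \<Longrightarrow> a \<cdot> e = a"
  using grp_comp_iff rl by (metis inv1)
lemma gc_r': "a \<in> grp_comp m e \<Longrightarrow> a \<cdot> (e \<cdot> z) = a \<cdot> z"
  using gc_r assoc by metis
lemma gc_inv: "a \<in> grp_comp m e \<Longrightarrow> iv a \<in> grp_comp m e"
  using grp_comp_iff rl by simp
lemma gc_inv_r: "a \<in> grp_comp m e \<Longrightarrow> a \<cdot> iv a = e"
  using grp_comp_iff by simp
lemma gc_inv_l: "a \<in> grp_comp m e \<Longrightarrow> iv a \<cdot> a = e"
  using grp_comp_iff rl by simp
lemma gc_inv_r': "a \<in> grp_comp m e \<Longrightarrow> a \<cdot> (iv a \<cdot> z) = e \<cdot> z"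
  using gc_inv_r assoc by metis
lemma gc_inv_l': "a \<in> grp_comp m e \<Longrightarrow> iv a \<cdot> (a \<cdot> z) = e \<cdot> z"
  using gc_inv_l assoc by metis

lemma gc_mult: assumes a: "a \<in> grp_comp m e" and b: "b \<in> grp_comp m f"
  shows "a \<cdot> b \<in> grp_comp m (e \<cdot> f)"
proof -
  have "a \<cdot> b \<cdot> iv (a \<cdot> b) = a \<cdot> (b \<cdot> iv b) \<cdot> iv a" by (simp add: inv_mult assoc)
  also have "\<dots> = a \<cdot> iv a \<cdot> f" using gc_inv_r[OF b] central[OF gc_idem[OF b]] by (simp add: assoc)
  also have "\<dots> = e \<cdot> f" using gc_inv_r[OF a] by simp
  finally show ?thesis using grp_comp_iff by simp
qed

lemma gc_idem_self: "e \<in> E \<Longrightarrow> e \<in> grp_comp m e"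
  using grp_comp_iff idem_inv idems_iff by simp

lemma gc_unique_idem: "x \<in> grp_comp m e \<Longrightarrow> x \<cdot> x = x \<Longrightarrow> x = e"
  using grp_comp_iff idem_inv idems_iff by force

lemma gc_same: "a \<in> grp_comp m e \<Longrightarrow> a \<in> grp_comp m e' \<Longrightarrow> e = e'"
  using grp_comp_iff by simp

lemma central': "e \<in> E \<Longrightarrow> a \<cdot> (e \<cdot> z) = e \<cdot> (a \<cdot> z)"
  by (metis assoc central)

lemma endo_gc: "endo m \<phi> \<Longrightarrow> a \<in> grp_comp m e \<Longrightarrow> \<phi> a \<in> grp_comp m (\<phi> e)"
  unfolding grp_comp_iff endo_def using endo_inv by (metis endo_def)

end

context inv_sg begin

definition R0 where "R0 = {(u,v). \<exists>e\<in>E. e \<cdot> u = e \<cdot> v}"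

lemma R0_right: assumes "e \<in> E" "e \<cdot> u = e \<cdot> v" shows "u \<cdot> (iv u \<cdot> (e \<cdot> u)) = v \<cdot> (iv u \<cdot> (e \<cdot> u))"
proof -
  have k: "iv u \<cdot> (e \<cdot> u) = iv v \<cdot> (e \<cdot> v)"
    using assms(2) inv_mult[of e u] inv_mult[of e v] idem_inv[OF assms(1)] by (metis assoc)
  have "u \<cdot> (iv u \<cdot> (e \<cdot> u)) = e \<cdot> (u \<cdot> (iv u \<cdot> u))" using idem_lcomm[OF rid assms(1)] by (simp add: assoc[symmetric])
  moreover have "v \<cdot> (iv v \<cdot> (e \<cdot> v)) = e \<cdot> (v \<cdot> (iv v \<cdot> v))" using idem_lcomm[OF rid assms(1)] by (simp add: assoc[symmetric])
  ultimately show ?thesis using k assms(2) by simp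
qed

lemma R0_equiv: "equiv UNIV R0"
proof (rule equivI)
  show "R0 \<subseteq> UNIV \<times> UNIV" by simp
  show "refl R0" unfolding refl_on_def R0_def using rid by blast
  show "sym R0" unfolding sym_def R0_def by (auto; metis)
  show "trans R0" unfolding trans_def R0_def
  proof clarify
    fix u v w e f assume e: "e \<in> E" "e \<cdot> u = e \<cdot> v" and f: "f \<in> E" "f \<cdot> v = f \<cdot> w"
    have "f \<cdot> e \<in> E" using idem_mult e f by blast
    moreover have "f \<cdot> e \<cdot> u = f \<cdot> e \<cdot> w"
      using e f by (metis assoc idem_comm)
    ultimately show "\<exists>g\<in>E. g \<cdot> u = g \<cdot> w" by blast
  qed
qed

lemma R0_group: "group_congruence m R0"
  unfolding group_congruence_def is_congruence_def
proof (intro conjI allI impI)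
  show "equiv UNIV R0" by (rule R0_equiv)
  fix a b c assume "(a, b) \<in> R0"
  then obtain e where e: "e \<in> E" "e \<cdot> a = e \<cdot> b" unfolding R0_def by blast
  have "e \<cdot> (a \<cdot> c) = e \<cdot> (b \<cdot> c)" using e(2) assoc by metis
  thus "(a \<cdot> c, b \<cdot> c) \<in> R0" unfolding R0_def using e(1) by blast
  let ?h = "c \<cdot> (e \<cdot> iv c)"
  have hE: "?h \<in> E" unfolding idems_iff using e(1) by (simp add: assoc lcomm_l lcomm_r lcomm_l0 lcomm_r0 idem_sq idem_sq')
  have "\<And>z. ?h \<cdot> (c \<cdot> z) = c \<cdot> (e \<cdot> z)" using e(1) by (simp add: assoc lcomm_l lcomm_r lcomm_l0 lcomm_r0 idem_sq idem_sq')
  hence "?h \<cdot> (c \<cdot> a) = ?h \<cdot> (c \<cdot> b)" using e(2) by simp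
  thus "(c \<cdot> a, c \<cdot> b) \<in> R0" unfolding R0_def using hE by blast
next
  obtain e0 :: 'a where e0: "e0 \<in> E" using rid by blast
  show "\<exists>u. \<forall>s. (u \<cdot> s, s) \<in> R0 \<and> (s \<cdot> u, s) \<in> R0 \<and> (\<exists>t. (s \<cdot> t, u) \<in> R0 \<and> (t \<cdot> s, u) \<in> R0)"
  proof (intro exI allI conjI)
    fix s
    show "(e0 \<cdot> s, s) \<in> R0" unfolding R0_def using e0 idem_sq'[OF e0] by blast
    let ?h = "s \<cdot> (e0 \<cdot> iv s)"
    have hE: "?h \<in> E" unfolding idems_iff using e0 by (simp add: assoc lcomm_l lcomm_r lcomm_l0 lcomm_r0 idem_sq idem_sq')
    have "?h \<cdot> (s \<cdot> e0) = s \<cdot> e0" using e0 by (simp add: assoc lcomm_l lcomm_r lcomm_l0 lcomm_r0 idem_sq idem_sq')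
    moreover have "?h \<cdot> s = s \<cdot> e0" using e0 by (simp add: assoc lcomm_l lcomm_r lcomm_l0 lcomm_r0 idem_sq idem_sq')
    ultimately have "?h \<cdot> (s \<cdot> e0) = ?h \<cdot> s" by simp
    thus "(s \<cdot> e0, s) \<in> R0" unfolding R0_def using hE by blast
    have hE2: "s \<cdot> iv s \<cdot> e0 \<in> E" using idem_mult rid e0 by blast
    have "s \<cdot> iv s \<cdot> e0 \<cdot> (s \<cdot> iv s) = s \<cdot> iv s \<cdot> e0 \<cdot> e0" using e0 by (simp add: assoc lcomm_l lcomm_r lcomm_l0 lcomm_r0 idem_sq idem_sq')
    thus "(s \<cdot> iv s, e0) \<in> R0" unfolding R0_def using hE2 by blast
    have hE3: "iv s \<cdot> s \<cdot> e0 \<in> E" using idem_mult lid e0 by blast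
    have "iv s \<cdot> s \<cdot> e0 \<cdot> (iv s \<cdot> s) = iv s \<cdot> s \<cdot> e0 \<cdot> e0" using e0 by (simp add: assoc lcomm_l lcomm_r lcomm_l0 lcomm_r0 idem_sq idem_sq')
    thus "(iv s \<cdot> s, e0) \<in> R0" unfolding R0_def using hE3 by blast
  qed
qed

lemma gc_contains_R0: assumes R: "group_congruence m R" shows "R0 \<subseteq> R"
proof -
  from R obtain u where u: "\<And>s. (u \<cdot> s, s) \<in> R \<and> (s \<cdot> u, s) \<in> R \<and> (\<exists>t. (s \<cdot> t, u) \<in> R \<and> (t \<cdot> s, u) \<in> R)"
    unfolding group_congruence_def by blast
  have eq: "equiv UNIV R" and cg: "\<And>a b c. (a, b) \<in> R \<Longrightarrow> (c \<cdot> a, c \<cdot> b) \<in> R \<and> (a \<cdot> c, b \<cdot> c) \<in> R"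
    using R unfolding group_congruence_def is_congruence_def by blast+
  have sy: "\<And>a b. (a,b) \<in> R \<Longrightarrow> (b,a) \<in> R" using eq unfolding equiv_def sym_def by blast
  have tr: "\<And>a b c. (a,b) \<in> R \<Longrightarrow> (b,c) \<in> R \<Longrightarrow> (a,c) \<in> R" using eq unfolding equiv_def trans_def by blast
  have eu: "(e, u) \<in> R" if e: "e \<in> E" for e
  proof -
    obtain t where t: "(t \<cdot> e, u) \<in> R" using u by blast
    have "(t \<cdot> e \<cdot> e, u \<cdot> e) \<in> R" using cg[OF t] by blast
    hence "(t \<cdot> e, u \<cdot> e) \<in> R" using idem_sq[OF e] by (simp add: assoc)
    hence "(u, u \<cdot> e) \<in> R" using t sy tr by blast
    moreover have "(u \<cdot> e, e) \<in> R" using u by blast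
    ultimately show ?thesis using tr sy by blast
  qed
  have es: "(e \<cdot> s, s) \<in> R" if e: "e \<in> E" for e s
  proof -
    have "(e \<cdot> s, u \<cdot> s) \<in> R" using cg[OF eu[OF e]] by blast
    thus ?thesis using u tr by blast
  qed
  show ?thesis
  proof
    fix p assume "p \<in> R0"
    then obtain a b e where p: "p = (a,b)" "e \<in> E" "e \<cdot> a = e \<cdot> b" unfolding R0_def by blast
    have "(a, e \<cdot> a) \<in> R" using es[OF p(2)] sy by blast
    moreover have "(e \<cdot> b, b) \<in> R" using es[OF p(2)] by blast
    ultimately show "p \<in> R" using p tr by metis
  qed
qed

lemma sigma_eq: "min_group_cong m = R0"
  unfolding min_group_cong_def using R0_group gc_contains_R0 by blast

lemma sigma_iff: "(u, v) \<in> min_group_cong m \<longleftrightarrow> (\<exists>e\<in>E. e \<cdot> u = e \<cdot> v)"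
  unfolding sigma_eq R0_def by simp

lemma sigma_equiv: "equiv UNIV (min_group_cong m)"
  unfolding sigma_eq by (rule R0_equiv)

lemma sigma_sym: "(u, v) \<in> min_group_cong m \<Longrightarrow> (v, u) \<in> min_group_cong m"
  using sigma_equiv unfolding equiv_def sym_def by blast
lemma sigma_trans: "(u, v) \<in> min_group_cong m \<Longrightarrow> (v, w) \<in> min_group_cong m \<Longrightarrow> (u, w) \<in> min_group_cong m"
  using sigma_equiv unfolding equiv_def trans_def by blast

lemma sigma_cong: assumes "(a, b) \<in> min_group_cong m" "(c, d) \<in> min_group_cong m"
  shows "(a \<cdot> c, b \<cdot> d) \<in> min_group_cong m"
proof -
  have "is_congruence m (min_group_cong m)" using R0_group sigma_eq unfolding group_congruence_def by simp
  hence "(a \<cdot> c, b \<cdot> c) \<in> min_group_cong m" "(b \<cdot> c, b \<cdot> d) \<in> min_group_cong m"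
    using assms unfolding is_congruence_def by blast+
  thus ?thesis using sigma_trans by blast
qed

lemma sigma_idl: "e \<in> E \<Longrightarrow> (s, e \<cdot> s) \<in> min_group_cong m"
  unfolding sigma_iff using idem_sq' by metis

lemma sigma_idr: assumes e: "e \<in> E" shows "(s, s \<cdot> e) \<in> min_group_cong m"
proof -
  have "(s \<cdot> e, s) \<in> R0" using R0_group e unfolding group_congruence_def
  proof -
    let ?h = "s \<cdot> (e \<cdot> iv s)"
    have hE: "?h \<in> E" unfolding idems_iff using e by (simp add: assoc lcomm_l lcomm_r lcomm_l0 lcomm_r0 idem_sq idem_sq')
    have "?h \<cdot> (s \<cdot> e) = s \<cdot> e" using e by (simp add: assoc lcomm_l lcomm_r lcomm_l0 lcomm_r0 idem_sq idem_sq')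
    moreover have "?h \<cdot> s = s \<cdot> e" using e by (simp add: assoc lcomm_l lcomm_r lcomm_l0 lcomm_r0 idem_sq idem_sq')
    ultimately have "?h \<cdot> (s \<cdot> e) = ?h \<cdot> s" by simp
    thus ?thesis unfolding R0_def using hE by blast
  qed
  thus ?thesis using sigma_eq sigma_sym by simp
qed

lemma sigma_inv: assumes "(u, v) \<in> min_group_cong m" shows "(iv u, iv v) \<in> min_group_cong m"
proof -
  obtain e where e: "e \<in> E" "e \<cdot> u = e \<cdot> v" using assms sigma_iff by blast
  let ?k = "iv u \<cdot> (e \<cdot> u)"
  have kE: "?k \<in> E" unfolding idems_iff using e(1) by (simp add: assoc lcomm_l lcomm_r lcomm_l0 lcomm_r0 idem_sq idem_sq')
  have "u \<cdot> ?k = v \<cdot> ?k" using R0_right[OF e] .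
  hence "iv (u \<cdot> ?k) = iv (v \<cdot> ?k)" by simp
  moreover have "iv (u \<cdot> ?k) = ?k \<cdot> iv u" by (simp only: inv_mult[of u ?k] idem_inv[OF kE])
  moreover have "iv (v \<cdot> ?k) = ?k \<cdot> iv v" by (simp only: inv_mult[of v ?k] idem_inv[OF kE])
  ultimately have "?k \<cdot> iv u = ?k \<cdot> iv v" by simp
  thus ?thesis unfolding sigma_iff using kE by blast
qed

lemma idl_dom: assumes "k \<in> E" "k \<cdot> (s \<cdot> iv s) = k" shows "k \<cdot> s \<cdot> iv (k \<cdot> s) = k"
proof -
  have "k \<cdot> s \<cdot> iv (k \<cdot> s) = (k \<cdot> (s \<cdot> iv s)) \<cdot> k" using idem_inv[OF assms(1)] by (simp add: inv_mult assoc)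
  also have "\<dots> = k" using assms idem_sq by simp
  finally show ?thesis .
qed

lemma sclass_mem: "t \<in> sclass m r \<longleftrightarrow> (r, t) \<in> min_group_cong m"
  unfolding sclass_def by simp

lemma sclass_GS: "sclass m r \<in> GS m"
  unfolding sclass_def GS_def by (simp add: quotientI)

lemma GS_rep: assumes "x \<in> GS m" shows "(SOME s. s \<in> x) \<in> x" "x = sclass m (SOME s. s \<in> x)"
proof -
  obtain r where r: "x = min_group_cong m `` {r}" using assms unfolding GS_def quotient_def by blast
  hence "r \<in> x" using sigma_equiv unfolding equiv_def refl_on_def by blast
  thus 1: "(SOME s. s \<in> x) \<in> x" by (rule someI)
  show "x = sclass m (SOME s. s \<in> x)" unfolding sclass_def using r 1 sigma_equiv
    by (metis Image_singleton_iff UNIV_I equiv_class_eq)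
qed

lemma GS_same: assumes "x \<in> GS m" "s \<in> x" "t \<in> x" shows "(s, t) \<in> min_group_cong m"
proof -
  obtain r where r: "x = min_group_cong m `` {r}" using assms unfolding GS_def quotient_def by blast
  thus ?thesis using assms sigma_sym sigma_trans by blast
qed

lemma GS_closed: assumes "x \<in> GS m" "s \<in> x" "(s, t) \<in> min_group_cong m" shows "t \<in> x"
proof -
  obtain r where r: "x = min_group_cong m `` {r}" using assms unfolding GS_def quotient_def by blast
  thus ?thesis using assms sigma_trans by blast
qed

end

locale eunit = inv_sg +
  assumes Eu: "E_unitary m"
begin

lemma eu_rule: "e \<in> E \<Longrightarrow> f \<in> E \<Longrightarrow> e = f \<cdot> s \<Longrightarrow> s \<in> E"
  using Eu unfolding E_unitary_def nat_le_def by blast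

lemma sigma_idem: assumes "(u, v) \<in> min_group_cong m" shows "iv u \<cdot> v \<in> E"
proof -
  obtain e where e: "e \<in> E" "e \<cdot> u = e \<cdot> v" using assms sigma_iff by blast
  let ?h = "iv u \<cdot> (e \<cdot> u)"
  have hE: "?h \<in> E" unfolding idems_iff using e(1) by (simp add: assoc lcomm_l lcomm_r lcomm_l0 lcomm_r0 idem_sq idem_sq')
  have "?h \<cdot> (iv u \<cdot> v) = iv u \<cdot> (e \<cdot> v)"
    using e(1) by (simp add: assoc lcomm_l lcomm_r lcomm_l0 lcomm_r0 idem_sq idem_sq')
  also have "\<dots> = ?h" using e(2) by simp
  finally show ?thesis using eu_rule[OF hE hE] by metis
qed

lemma sigma_unique: assumes "(u, v) \<in> min_group_cong m" "u \<cdot> iv u = v \<cdot> iv v" shows "u = v"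
proof -
  have p: "iv u \<cdot> v \<in> E" using sigma_idem assms(1) .
  have q: "iv v \<cdot> u \<in> E" using sigma_idem sigma_sym assms(1) by blast
  have pq: "iv u \<cdot> v = iv v \<cdot> u" using idem_inv[OF p] inv_mult by simp
  have "v = u \<cdot> (iv u \<cdot> v)" using assms(2) by (metis assoc inv1)
  have "u = v \<cdot> (iv v \<cdot> u)" using assms(2) by (metis assoc inv1)
  hence u: "u = v \<cdot> (iv u \<cdot> v)" using pq by simp
  have "v = u \<cdot> (iv u \<cdot> v)" using assms(2) by (metis assoc inv1)
  also have "\<dots> = v \<cdot> ((iv u \<cdot> v) \<cdot> (iv u \<cdot> v))" using u by (metis assoc)
  also have "\<dots> = v \<cdot> (iv u \<cdot> v)" using p idems_iff by simp
  also have "\<dots> = u" using u by simp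
  finally show ?thesis by simp
qed

lemma sigma_unique': assumes "(u, v) \<in> min_group_cong m" "iv u \<cdot> u = iv v \<cdot> v" shows "u = v"
proof -
  have "iv u = iv v" using sigma_unique[OF sigma_inv[OF assms(1)]] assms(2) by simp
  thus ?thesis by (metis inv_inv)
qed

end

locale setting = S: eunit mS + A: clifford mA
  for mS :: "'s \<Rightarrow> 's \<Rightarrow> 's" (infixl "\<cdot>" 70) and mA :: "'a \<Rightarrow> 'a \<Rightarrow> 'a" (infixl "\<odot>" 70) +
  fixes \<alpha> \<alpha>' :: "'s \<Rightarrow> 'a" and lam lam' :: "'s \<Rightarrow> 'a \<Rightarrow> 'a" and f f' :: "'s \<Rightarrow> 's \<Rightarrow> 'a"
    and g :: "'s \<Rightarrow> 'a"
  assumes M: "sieben_twisted_module mS mA \<alpha> lam f"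
    and M': "sieben_twisted_module mS mA \<alpha>' lam' f'"
    and aeq: "\<And>e. e \<in> S.E \<Longrightarrow> \<alpha>' e = \<alpha> e"
    and g_gc: "\<And>s. g s \<in> grp_comp mA (\<alpha> (s \<cdot> S.iv s))"
    and g_lam: "\<And>s a. lam' s a = g s \<odot> lam s a \<odot> A.iv (g s)"
    and g_f: "\<And>s t. f' s t \<odot> g (s \<cdot> t) = g s \<odot> lam s (g t) \<odot> f s t"
begin

lemma sv_bij: "sieben_twisted_module mS mA a l h \<Longrightarrow> bij_betw a S.E A.E"
  unfolding sieben_twisted_module_def by simp
lemma sv_alphaE: "sieben_twisted_module mS mA a l h \<Longrightarrow> e \<in> S.E \<Longrightarrow> a e \<in> A.E"
  using sv_bij bij_betw_apply by metis
lemma sv_inj: "sieben_twisted_module mS mA a l h \<Longrightarrow> e \<in> S.E \<Longrightarrow> e' \<in> S.E \<Longrightarrow> a e = a e' \<Longrightarrow> e = e'"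
  using sv_bij bij_betw_imp_inj_on inj_onD by metis
lemma sv_hom: "sieben_twisted_module mS mA a l h \<Longrightarrow> e \<in> S.E \<Longrightarrow> e' \<in> S.E \<Longrightarrow> a (e \<cdot> e') = a e \<odot> a e'"
  unfolding sieben_twisted_module_def by blast
lemma sv_endo: "sieben_twisted_module mS mA a l h \<Longrightarrow> endo mA (l s)"
  unfolding sieben_twisted_module_def rel_invertible_def by blast
lemma sv_lamE: "sieben_twisted_module mS mA a l h \<Longrightarrow> e \<in> S.E \<Longrightarrow> l e b = a e \<odot> b"
  unfolding sieben_twisted_module_def by blast
lemma sv_lam_alpha: "sieben_twisted_module mS mA a l h \<Longrightarrow> e \<in> S.E \<Longrightarrow> l s (a e) = a (s \<cdot> e \<cdot> S.iv s)"
  unfolding sieben_twisted_module_def by blast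
lemma sv_fgc: "sieben_twisted_module mS mA a l h \<Longrightarrow> h s t \<in> grp_comp mA (a (s \<cdot> t \<cdot> S.iv (s \<cdot> t)))"
  unfolding sieben_twisted_module_def S.inv_mult by blast
lemma sv_fE1: "sieben_twisted_module mS mA a l h \<Longrightarrow> e \<in> S.E \<Longrightarrow> h s e = a (s \<cdot> e \<cdot> S.iv s)"
  unfolding sieben_twisted_module_def by blast
lemma sv_fE2: "sieben_twisted_module mS mA a l h \<Longrightarrow> e \<in> S.E \<Longrightarrow> h e s = a (e \<cdot> s \<cdot> S.iv s)"
  unfolding sieben_twisted_module_def by blast

lemmas alphaE = sv_alphaE[OF M] and alpha_inj = sv_inj[OF M] and alpha_hom = sv_hom[OF M]
  and lam_endo = sv_endo[OF M] and lamE = sv_lamE[OF M] and lam_alpha = sv_lam_alpha[OF M]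
  and f_gc = sv_fgc[OF M] and fE1 = sv_fE1[OF M] and fE2 = sv_fE2[OF M]

lemma lam_mult: "lam s (a \<odot> b) = lam s a \<odot> lam s b"
  using lam_endo unfolding endo_def by blast

lemma f'_gc: "f' s t \<in> grp_comp mA (\<alpha> (s \<cdot> t \<cdot> S.iv (s \<cdot> t)))"
  using sv_fgc[OF M'] aeq S.rid by metis

lemma SE_mult: "e \<in> S.E \<Longrightarrow> e' \<in> S.E \<Longrightarrow> e \<cdot> e' \<in> S.E" by (rule S.idem_mult)

lemma g_idem: assumes e: "e \<in> S.E" shows "g e = \<alpha> e"
proof -
  have ee: "e \<cdot> e = e" using S.idem_sq[OF e] .
  have iv: "S.iv e = e" using S.idem_inv[OF e] .
  have ge: "g e \<in> grp_comp mA (\<alpha> e)" using g_gc[of e] ee iv by simp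
  have "f' e e \<odot> g (e \<cdot> e) = g e \<odot> lam e (g e) \<odot> f e e" by (rule g_f)
  moreover have "f' e e = \<alpha> e" using sv_fE1[OF M' e, of e] aeq[OF e] ee iv by simp
  moreover have "f e e = \<alpha> e" using fE1[OF e, of e] ee iv by simp
  moreover have "lam e (g e) = \<alpha> e \<odot> g e" using lamE[OF e] .
  ultimately have "g e = g e \<odot> g e \<odot> \<alpha> e" using ge A.gc_l[OF ge] ee by (simp add: A.assoc)
  also have "\<dots> = g e \<odot> g e" using A.gc_r[OF A.gc_mult[OF ge ge]] A.idem_sq[OF A.gc_idem[OF ge]] by simp
  finally show ?thesis using A.gc_unique_idem[OF ge] by simp
qed

lemma g_left: assumes e: "e \<in> S.E" shows "g (e \<cdot> s) = \<alpha> (e \<cdot> (s \<cdot> S.iv s)) \<odot> g s"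
proof -
  let ?P = "e \<cdot> s \<cdot> S.iv s"
  have PE: "?P \<in> S.E" using S.idem_mult[OF e S.rid[of s]] by (simp add: S.assoc)
  have PP: "e \<cdot> s \<cdot> S.iv (e \<cdot> s) = ?P"
    using S.idem_inv[OF e] S.idem_comm[OF e S.rid[of s]] S.idem_sq[OF e]
    by (simp add: S.inv_mult S.assoc) (metis S.assoc S.idem_sq S.rid)
  have gp: "g (e \<cdot> s) \<in> grp_comp mA (\<alpha> ?P)" using g_gc[of "e \<cdot> s"] PP by simp
  have "f' e s \<odot> g (e \<cdot> s) = g e \<odot> lam e (g s) \<odot> f e s" by (rule g_f)
  moreover have "f' e s = \<alpha> ?P" using sv_fE2[OF M' e] aeq[OF PE] by simp
  moreover have "f e s = \<alpha> ?P" using fE2[OF e] by simp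
  moreover have "lam e (g s) = \<alpha> e \<odot> g s" using lamE[OF e] .
  moreover have "g e = \<alpha> e" using g_idem[OF e] .
  ultimately have 1: "g (e \<cdot> s) = \<alpha> e \<odot> (\<alpha> e \<odot> g s) \<odot> \<alpha> ?P" using A.gc_l[OF gp] by simp
  have aeE: "\<alpha> e \<in> A.E" using alphaE[OF e] .
  have "\<alpha> e \<odot> (\<alpha> e \<odot> g s) \<odot> \<alpha> ?P = \<alpha> ?P \<odot> (\<alpha> e \<odot> g s)"
    using A.idem_sq'[OF aeE] A.central[OF alphaE[OF PE]] by simp
  also have "\<dots> = \<alpha> (?P \<cdot> e) \<odot> g s" using alpha_hom[OF PE e] by (simp add: A.assoc)
  also have "?P \<cdot> e = e \<cdot> (s \<cdot> S.iv s)"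
    using S.idem_comm[OF PE e] S.idem_sq'[OF e] by (simp add: S.assoc)
  finally show ?thesis using 1 by simp
qed

lemma g_compat: assumes x: "x \<in> GS mS" and s: "s \<in> x" and t: "t \<in> x"
  shows "\<alpha> (s \<cdot> S.iv s \<cdot> (t \<cdot> S.iv t)) \<odot> g s = \<alpha> (s \<cdot> S.iv s \<cdot> (t \<cdot> S.iv t)) \<odot> g t"
proof -
  let ?k = "s \<cdot> S.iv s \<cdot> (t \<cdot> S.iv t)"
  have kE: "?k \<in> S.E" using S.idem_mult[OF S.rid S.rid] .
  have ks: "?k \<cdot> (s \<cdot> S.iv s) = ?k"
    using S.idem_comm[OF S.rid[of s] S.rid[of t]] S.idem_sq[OF S.rid[of s]] by (metis S.assoc)
  have kt: "?k \<cdot> (t \<cdot> S.iv t) = ?k"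
    using S.idem_sq[OF S.rid[of t]] by (metis S.assoc)
  have kk: "(?k, ?k) \<in> min_group_cong mS" using S.sigma_equiv unfolding equiv_def refl_on_def by blast
  have "(?k \<cdot> s, ?k \<cdot> t) \<in> min_group_cong mS"
    using S.sigma_cong[OF kk S.GS_same[OF x s t]] .
  hence eq: "?k \<cdot> s = ?k \<cdot> t" using S.sigma_unique S.idl_dom[OF kE ks] S.idl_dom[OF kE kt] by metis
  have "g (?k \<cdot> s) = \<alpha> ?k \<odot> g s" using g_left[OF kE, of s] ks by simp
  moreover have "g (?k \<cdot> t) = \<alpha> ?k \<odot> g t" using g_left[OF kE, of t] kt by simp
  ultimately show ?thesis using eq by simp
qed

end

context setting begin

definition sel where "sel x a = (THE s. s \<in> x \<and> \<alpha> (s \<cdot> S.iv s) = a \<odot> A.iv a)"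
definition eps where "eps h x = (\<lambda>a. h (sel x a) \<odot> a, \<lambda>a. a \<odot> h (sel x a))"

lemma the_sel: assumes x: "x \<in> GS mS" and s: "s \<in> x" and a: "\<alpha> (s \<cdot> S.iv s) = c"
  shows "(THE s. s \<in> x \<and> \<alpha> (s \<cdot> S.iv s) = c) = s"
proof (rule the_equality)
  show "s \<in> x \<and> \<alpha> (s \<cdot> S.iv s) = c" using s a by simp
  fix t assume t: "t \<in> x \<and> \<alpha> (t \<cdot> S.iv t) = c"
  hence "t \<cdot> S.iv t = s \<cdot> S.iv s" using alpha_inj[OF S.rid S.rid] a by metis
  thus "t = s" using S.sigma_unique[OF S.GS_same[OF x] ] t s by metis
qed

lemma the_sel': assumes x: "x \<in> GS mS" and s: "s \<in> x" and a: "\<alpha> (S.iv s \<cdot> s) = c"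
  shows "(THE s. s \<in> x \<and> \<alpha> (S.iv s \<cdot> s) = c) = s"
proof (rule the_equality)
  show "s \<in> x \<and> \<alpha> (S.iv s \<cdot> s) = c" using s a by simp
  fix t assume t: "t \<in> x \<and> \<alpha> (S.iv t \<cdot> t) = c"
  hence "S.iv t \<cdot> t = S.iv s \<cdot> s" using alpha_inj[OF S.lid S.lid] a by metis
  thus "t = s" using S.sigma_unique'[OF S.GS_same[OF x] ] t s by metis
qed

lemma sel_gc: assumes x: "x \<in> GS mS" and s: "s \<in> x" and a: "a \<in> grp_comp mA (\<alpha> (s \<cdot> S.iv s))"
  shows "sel x a = s"
  unfolding sel_def using the_sel[OF x s] A.gc_inv_r[OF a] by simp

lemma Dom_iff: "a \<in> Dom mS mA \<alpha> x \<longleftrightarrow> (\<exists>s\<in>x. a \<in> grp_comp mA (\<alpha> (s \<cdot> S.iv s)))"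
  unfolding Dom_def by simp

lemma Dom_sel: assumes x: "x \<in> GS mS" and a: "a \<in> Dom mS mA \<alpha> x"
  shows "sel x a \<in> x" "a \<in> grp_comp mA (\<alpha> (sel x a \<cdot> S.iv (sel x a)))"
proof -
  obtain s where s: "s \<in> x" "a \<in> grp_comp mA (\<alpha> (s \<cdot> S.iv s))" using a Dom_iff by blast
  have "sel x a = s" using sel_gc[OF x s] .
  thus "sel x a \<in> x" "a \<in> grp_comp mA (\<alpha> (sel x a \<cdot> S.iv (sel x a)))" using s by simp_all
qed

definition hgood where "hgood x h \<longleftrightarrow> (\<forall>s. h s \<in> grp_comp mA (\<alpha> (s \<cdot> S.iv s))) \<and>
   (\<forall>s\<in>x. \<forall>t\<in>x. \<alpha> (s \<cdot> S.iv s \<cdot> (t \<cdot> S.iv t)) \<odot> h s = \<alpha> (s \<cdot> S.iv s \<cdot> (t \<cdot> S.iv t)) \<odot> h t)"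

lemma g_good: "x \<in> GS mS \<Longrightarrow> hgood x g"
  unfolding hgood_def using g_gc g_compat by blast

lemma ginv_good: assumes x: "x \<in> GS mS" shows "hgood x (\<lambda>s. A.iv (g s))"
  unfolding hgood_def
proof (intro conjI allI ballI)
  fix s show "A.iv (g s) \<in> grp_comp mA (\<alpha> (s \<cdot> S.iv s))" using A.gc_inv g_gc by blast
next
  fix s t assume s: "s \<in> x" and t: "t \<in> x"
  let ?k = "s \<cdot> S.iv s \<cdot> (t \<cdot> S.iv t)"
  have kE: "\<alpha> ?k \<in> A.E" using alphaE S.idem_mult S.rid by blast
  have "A.iv (\<alpha> ?k \<odot> g s) = A.iv (\<alpha> ?k \<odot> g t)" using g_compat[OF x s t] by simp
  hence "A.iv (g s) \<odot> \<alpha> ?k = A.iv (g t) \<odot> \<alpha> ?k" using A.idem_inv[OF kE] by (simp add: A.inv_mult)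
  thus "\<alpha> ?k \<odot> A.iv (g s) = \<alpha> ?k \<odot> A.iv (g t)" using A.central[OF kE] by simp
qed

lemma prod_dom: assumes x: "x \<in> GS mS" and a: "a \<in> Dom mS mA \<alpha> x" and b: "b \<in> Dom mS mA \<alpha> x"
  defines "k \<equiv> sel x a \<cdot> S.iv (sel x a) \<cdot> (sel x b \<cdot> S.iv (sel x b))"
  shows "k \<cdot> sel x a \<in> x" "k \<cdot> sel x a \<cdot> S.iv (k \<cdot> sel x a) = k" "a \<odot> b \<in> grp_comp mA (\<alpha> k)"
    "sel x (a \<odot> b) = k \<cdot> sel x a" "k \<in> S.E"
    "k \<cdot> (sel x a \<cdot> S.iv (sel x a)) = k" "k \<cdot> (sel x b \<cdot> S.iv (sel x b)) = k"
    "\<alpha> k = \<alpha> (sel x a \<cdot> S.iv (sel x a)) \<odot> \<alpha> (sel x b \<cdot> S.iv (sel x b))"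
proof -
  let ?sa = "sel x a" and ?sb = "sel x b"
  show kE: "k \<in> S.E" unfolding k_def using S.idem_mult S.rid by blast
  show ks: "k \<cdot> (?sa \<cdot> S.iv ?sa) = k" unfolding k_def
    using S.idem_comm[OF S.rid[of ?sa] S.rid[of ?sb]] S.idem_sq[OF S.rid[of ?sa]] by (metis S.assoc)
  show "k \<cdot> (?sb \<cdot> S.iv ?sb) = k" unfolding k_def
    using S.idem_sq[OF S.rid[of ?sb]] by (metis S.assoc)
  show ak: "\<alpha> k = \<alpha> (?sa \<cdot> S.iv ?sa) \<odot> \<alpha> (?sb \<cdot> S.iv ?sb)" unfolding k_def using alpha_hom S.rid by blast
  show dom: "k \<cdot> ?sa \<cdot> S.iv (k \<cdot> ?sa) = k" using S.idl_dom[OF kE ks] .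
  show inx: "k \<cdot> ?sa \<in> x" using S.GS_closed[OF x Dom_sel(1)[OF x a] S.sigma_idl[OF kE]] .
  show ab: "a \<odot> b \<in> grp_comp mA (\<alpha> k)" unfolding ak using A.gc_mult Dom_sel(2)[OF x a] Dom_sel(2)[OF x b] by blast
  show "sel x (a \<odot> b) = k \<cdot> ?sa" using sel_gc[OF x inx] ab dom by simp
qed

lemma eps_mult: assumes x: "x \<in> GS mS" and h: "hgood x h"
  shows "is_multiplier mA (Dom mS mA \<alpha> x) (eps h x)"
proof -
  have hgc: "\<And>s. h s \<in> grp_comp mA (\<alpha> (s \<cdot> S.iv s))" using h unfolding hgood_def by blast
  have hc: "\<And>s t. s \<in> x \<Longrightarrow> t \<in> x \<Longrightarrow> \<alpha> (s \<cdot> S.iv s \<cdot> (t \<cdot> S.iv t)) \<odot> h s = \<alpha> (s \<cdot> S.iv s \<cdot> (t \<cdot> S.iv t)) \<odot> h t"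
    using h unfolding hgood_def by blast
  have cl: "h (sel x a) \<odot> a \<in> Dom mS mA \<alpha> x \<and> a \<odot> h (sel x a) \<in> Dom mS mA \<alpha> x" if a: "a \<in> Dom mS mA \<alpha> x" for a
  proof -
    let ?s = "sel x a"
    have p: "\<alpha> (?s \<cdot> S.iv ?s) \<in> A.E" using alphaE S.rid by blast
    have "h ?s \<odot> a \<in> grp_comp mA (\<alpha> (?s \<cdot> S.iv ?s))" "a \<odot> h ?s \<in> grp_comp mA (\<alpha> (?s \<cdot> S.iv ?s))"
      using A.gc_mult[OF hgc[of ?s] Dom_sel(2)[OF x a]] A.gc_mult[OF Dom_sel(2)[OF x a] hgc[of ?s]] A.idem_sq[OF p] by auto
    thus ?thesis using Dom_iff Dom_sel(1)[OF x a] by blast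
  qed
  have pr: "h (sel x (a \<odot> b)) \<odot> (a \<odot> b) = h (sel x a) \<odot> a \<odot> b \<and>
            (a \<odot> b) \<odot> h (sel x (a \<odot> b)) = a \<odot> (b \<odot> h (sel x b)) \<and>
            a \<odot> (h (sel x b) \<odot> b) = (a \<odot> h (sel x a)) \<odot> b"
    if a: "a \<in> Dom mS mA \<alpha> x" and b: "b \<in> Dom mS mA \<alpha> x" for a b
  proof -
    let ?sa = "sel x a" and ?sb = "sel x b"
    define k where "k = ?sa \<cdot> S.iv ?sa \<cdot> (?sb \<cdot> S.iv ?sb)"
    note P = prod_dom[OF x a b, folded k_def]
    let ?u = "k \<cdot> ?sa"
    have akE: "\<alpha> k \<in> A.E" using alphaE P(5) by blast
    have hu: "h ?u \<in> grp_comp mA (\<alpha> k)" using hgc[of ?u] P(2) by simp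
    have "\<alpha> (?u \<cdot> S.iv ?u \<cdot> (?sa \<cdot> S.iv ?sa)) \<odot> h ?u = \<alpha> (?u \<cdot> S.iv ?u \<cdot> (?sa \<cdot> S.iv ?sa)) \<odot> h ?sa"
      using hc[OF P(1) Dom_sel(1)[OF x a]] .
    hence hua: "h ?u = \<alpha> k \<odot> h ?sa" using P(2) P(6) A.gc_l[OF hu] by simp
    have "\<alpha> (?u \<cdot> S.iv ?u \<cdot> (?sb \<cdot> S.iv ?sb)) \<odot> h ?u = \<alpha> (?u \<cdot> S.iv ?u \<cdot> (?sb \<cdot> S.iv ?sb)) \<odot> h ?sb"
      using hc[OF P(1) Dom_sel(1)[OF x b]] .
    hence hub: "h ?u = \<alpha> k \<odot> h ?sb" using P(2) P(7) A.gc_l[OF hu] by simp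
    have ab: "a \<odot> b \<in> grp_comp mA (\<alpha> k)" using P(3) .
    have 1: "h (sel x (a \<odot> b)) \<odot> (a \<odot> b) = h ?sa \<odot> a \<odot> b"
    proof -
      have "h (sel x (a \<odot> b)) \<odot> (a \<odot> b) = \<alpha> k \<odot> (h ?sa \<odot> (a \<odot> b))" using P(4) hua by (simp add: A.assoc)
      also have "\<dots> = h ?sa \<odot> ((a \<odot> b) \<odot> \<alpha> k)" using A.central[OF akE] by (simp add: A.assoc)
      also have "\<dots> = h ?sa \<odot> a \<odot> b" using A.gc_r[OF ab] by (simp add: A.assoc)
      finally show ?thesis .
    qed
    have 2: "(a \<odot> b) \<odot> h (sel x (a \<odot> b)) = a \<odot> (b \<odot> h ?sb)"
    proof -
      have "(a \<odot> b) \<odot> h (sel x (a \<odot> b)) = ((a \<odot> b) \<odot> \<alpha> k) \<odot> h ?sb" using P(4) hub by (simp add: A.assoc)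
      thus ?thesis using A.gc_r'[OF ab] by (simp add: A.assoc)
    qed
    have 3: "a \<odot> (h ?sb \<odot> b) = (a \<odot> h ?sa) \<odot> b"
    proof -
      let ?pa = "\<alpha> (?sa \<cdot> S.iv ?sa)" and ?pb = "\<alpha> (?sb \<cdot> S.iv ?sb)"
      have ga: "a \<in> grp_comp mA ?pa" and gb: "b \<in> grp_comp mA ?pb" using Dom_sel(2) x a b by blast+
      have pbE: "?pb \<in> A.E" using alphaE S.rid by blast
      have paE: "?pa \<in> A.E" using alphaE S.rid by blast
      have "a \<odot> (h ?sb \<odot> b) = a \<odot> (?pa \<odot> (?pb \<odot> (h ?sb \<odot> b)))"
        using A.gc_r'[OF ga] A.central'[OF pbE, of "h ?sb" b] A.gc_l[OF gb] by simp
      also have "\<dots> = a \<odot> (\<alpha> k \<odot> h ?sb \<odot> b)" using P(8) by (simp add: A.assoc)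
      also have "\<dots> = a \<odot> (\<alpha> k \<odot> h ?sa \<odot> b)" using hua hub by simp
      also have "\<dots> = a \<odot> (?pa \<odot> (h ?sa \<odot> (?pb \<odot> b)))"
        using P(8) A.central'[OF pbE, of "h ?sa" b] by (simp add: A.assoc)
      also have "\<dots> = (a \<odot> h ?sa) \<odot> b" using A.gc_r'[OF ga] A.gc_l[OF gb] by (simp add: A.assoc)
      finally show ?thesis .
    qed
    show ?thesis using 1 2 3 by simp
  qed
  show ?thesis unfolding is_multiplier_def eps_def
  proof (intro conjI ballI)
    fix a assume "a \<in> Dom mS mA \<alpha> x"
    thus "fst (\<lambda>a. h (sel x a) \<odot> a, \<lambda>a. a \<odot> h (sel x a)) a \<in> Dom mS mA \<alpha> x"
      "snd (\<lambda>a. h (sel x a) \<odot> a, \<lambda>a. a \<odot> h (sel x a)) a \<in> Dom mS mA \<alpha> x" using cl by auto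
  next
    fix a b assume "a \<in> Dom mS mA \<alpha> x" "b \<in> Dom mS mA \<alpha> x"
    thus "fst (\<lambda>a. h (sel x a) \<odot> a, \<lambda>a. a \<odot> h (sel x a)) (a \<odot> b) =
        fst (\<lambda>a. h (sel x a) \<odot> a, \<lambda>a. a \<odot> h (sel x a)) a \<odot> b"
      "snd (\<lambda>a. h (sel x a) \<odot> a, \<lambda>a. a \<odot> h (sel x a)) (a \<odot> b) =
        a \<odot> snd (\<lambda>a. h (sel x a) \<odot> a, \<lambda>a. a \<odot> h (sel x a)) b"
      "a \<odot> fst (\<lambda>a. h (sel x a) \<odot> a, \<lambda>a. a \<odot> h (sel x a)) b =
        snd (\<lambda>a. h (sel x a) \<odot> a, \<lambda>a. a \<odot> h (sel x a)) a \<odot> b"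
      using pr by (simp_all add: A.assoc)
  qed
qed

end

context setting begin

lemma eps_unit: assumes x: "x \<in> GS mS"
  shows "is_unit_multiplier_with_inv mA (Dom mS mA \<alpha> x) (eps g x) (eps (\<lambda>s. A.iv (g s)) x)"
  unfolding is_unit_multiplier_with_inv_def
proof (intro conjI ballI)
  show "is_multiplier mA (Dom mS mA \<alpha> x) (eps g x)" using eps_mult[OF x g_good[OF x]] .
  show "is_multiplier mA (Dom mS mA \<alpha> x) (eps (\<lambda>s. A.iv (g s)) x)" using eps_mult[OF x ginv_good[OF x]] .
  fix a assume a: "a \<in> Dom mS mA \<alpha> x"
  obtain s0 where ss: "sel x a = s0" by blast
  let ?s = "s0"
  let ?p = "\<alpha> (?s \<cdot> S.iv ?s)"
  have sx: "?s \<in> x" and ga: "a \<in> grp_comp mA ?p" using Dom_sel[OF x a] ss by blast+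
  have pE: "?p \<in> A.E" using alphaE S.rid by blast
  have gs: "g ?s \<in> grp_comp mA ?p" using g_gc .
  have gi: "A.iv (g ?s) \<in> grp_comp mA ?p" using A.gc_inv[OF gs] .
  have pp: "?p \<odot> ?p = ?p" using A.idem_sq[OF pE] .
  have s1: "sel x (A.iv (g ?s) \<odot> a) = ?s" using sel_gc[OF x sx] A.gc_mult[OF gi ga] pp by simp
  have s2: "sel x (g ?s \<odot> a) = ?s" using sel_gc[OF x sx] A.gc_mult[OF gs ga] pp by simp
  have s3: "sel x (a \<odot> A.iv (g ?s)) = ?s" using sel_gc[OF x sx] A.gc_mult[OF ga gi] pp by simp
  have s4: "sel x (a \<odot> g ?s) = ?s" using sel_gc[OF x sx] A.gc_mult[OF ga gs] pp by simp
  show "fst (eps g x) (fst (eps (\<lambda>s. A.iv (g s)) x) a) = a"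
    unfolding eps_def using ss s1 A.gc_inv_r'[OF gs] A.gc_l[OF ga] by simp
  show "fst (eps (\<lambda>s. A.iv (g s)) x) (fst (eps g x) a) = a"
    unfolding eps_def using ss s2 A.gc_inv_l'[OF gs] A.gc_l[OF ga] by simp
  show "snd (eps g x) (snd (eps (\<lambda>s. A.iv (g s)) x) a) = a"
    unfolding eps_def using ss s3 A.gc_inv_l[OF gs] A.gc_r[OF ga] by (simp add: A.assoc)
  show "snd (eps (\<lambda>s. A.iv (g s)) x) (snd (eps g x) a) = a"
    unfolding eps_def using ss s4 A.gc_inv_r[OF gs] A.gc_r[OF ga] by (simp add: A.assoc)
qed

lemma theta_eq: assumes x: "x \<in> GS mS" and u: "u \<in> x" and a: "\<alpha> (S.iv u \<cdot> u) = a \<odot> A.iv a"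
  shows "theta mS mA \<alpha> L x a = L u a"
  unfolding theta_def using the_sel'[OF x u a] by simp

lemma GS_mult_GS: "GS_mult mS x y \<in> GS mS"
  unfolding GS_mult_def by (rule S.sclass_GS)

lemma wmult_snd: assumes x: "x \<in> GS mS" and y: "y \<in> GS mS" and s: "s \<in> x" and t: "t \<in> GS_mult mS x y"
  and ds: "\<alpha> (s \<cdot> S.iv s) = d \<odot> A.iv d" and dt: "\<alpha> (t \<cdot> S.iv t) = d \<odot> A.iv d"
  shows "snd (wmult mS mA \<alpha> F x y) d = d \<odot> F s (S.iv s \<cdot> t)"
  unfolding wmult_def Let_def using the_sel[OF x s ds] the_sel[OF GS_mult_GS t dt] by simp

lemma Dom_alpha': "Dom mS mA \<alpha>' = Dom mS mA \<alpha>"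
  unfolding Dom_def using aeq[OF S.rid] by (intro ext) simp
lemma theta_alpha': "theta mS mA \<alpha>' L = theta mS mA \<alpha> L"
  unfolding theta_def using aeq[OF S.lid] by (intro ext) simp
lemma wmult_alpha': "wmult mS mA \<alpha>' F = wmult mS mA \<alpha> F"
  unfolding wmult_def using aeq[OF S.rid] by (intro ext) simp

end

context setting begin

lemma inv_class: assumes x: "x \<in> GS mS" and t: "t \<in> GS_inv mS x" shows "S.iv t \<in> x"
proof -
  let ?r = "SOME s. s \<in> x"
  have "(S.iv ?r, t) \<in> min_group_cong mS" using t unfolding GS_inv_def S.sclass_mem .
  hence "(?r, S.iv t) \<in> min_group_cong mS" using S.sigma_inv by fastforce
  thus ?thesis using S.GS_rep(2)[OF x] S.sclass_mem by metis
qed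

lemma lam_gc: assumes "a \<in> grp_comp mA (\<alpha> (S.iv u \<cdot> u))" shows "lam u a \<in> grp_comp mA (\<alpha> (u \<cdot> S.iv u))"
proof -
  have "lam u a \<in> grp_comp mA (lam u (\<alpha> (S.iv u \<cdot> u)))" using A.endo_gc[OF lam_endo assms] .
  also have "lam u (\<alpha> (S.iv u \<cdot> u)) = \<alpha> (u \<cdot> S.iv u)" using lam_alpha[OF S.lid] by (simp add: S.assoc)
  finally show ?thesis .
qed

lemma cond1: assumes x: "x \<in> GS mS" and a: "a \<in> Dom mS mA \<alpha> (GS_inv mS x)"
  shows "theta mS mA \<alpha> lam' x a = snd (eps (\<lambda>s. A.iv (g s)) x) (fst (eps g x) (theta mS mA \<alpha> lam x a))"
proof -
  obtain t where t: "t \<in> GS_inv mS x" "a \<in> grp_comp mA (\<alpha> (t \<cdot> S.iv t))" using a Dom_iff by blast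
  define u where "u = S.iv t"
  have ux: "u \<in> x" unfolding u_def using inv_class[OF x t(1)] .
  have au: "a \<in> grp_comp mA (\<alpha> (S.iv u \<cdot> u))" using t(2) unfolding u_def by simp
  have th: "\<And>L. theta mS mA \<alpha> L x a = L u a" using theta_eq[OF x ux] A.gc_inv_r[OF au] by simp
  have p: "\<alpha> (u \<cdot> S.iv u) \<in> A.E" using alphaE S.rid by blast
  have l: "lam u a \<in> grp_comp mA (\<alpha> (u \<cdot> S.iv u))" using lam_gc[OF au] .
  have s1: "sel x (lam u a) = u" using sel_gc[OF x ux l] .
  have s2: "sel x (g u \<odot> lam u a) = u" using sel_gc[OF x ux] A.gc_mult[OF g_gc[of u] l] A.idem_sq[OF p] by simp
  show ?thesis unfolding th eps_def using s1 s2 g_lam by simp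
qed

lemma cond2: assumes x: "x \<in> GS mS" and y: "y \<in> GS mS"
  and a: "a \<in> setmul mA (Dom mS mA \<alpha> (GS_inv mS x)) (Dom mS mA \<alpha> y)"
  shows "snd (eps g (GS_mult mS x y)) (snd (wmult mS mA \<alpha> f' x y) (theta mS mA \<alpha> lam' x a)) =
         fst (eps g x) (snd (wmult mS mA \<alpha> f x y) (theta mS mA \<alpha> lam x (snd (eps g y) a)))"
proof -
  obtain b c where bc: "a = b \<odot> c" "b \<in> Dom mS mA \<alpha> (GS_inv mS x)" "c \<in> Dom mS mA \<alpha> y"
    using a unfolding setmul_def by blast
  obtain t where t: "t \<in> GS_inv mS x" "b \<in> grp_comp mA (\<alpha> (t \<cdot> S.iv t))" using bc(2) Dom_iff by blast
  obtain v where v: "v \<in> y" "c \<in> grp_comp mA (\<alpha> (v \<cdot> S.iv v))" using bc(3) Dom_iff by blast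
  define e where "e = t \<cdot> S.iv t \<cdot> (v \<cdot> S.iv v)"
  have eE: "e \<in> S.E" unfolding e_def using S.idem_mult S.rid by blast
  have aeE: "\<alpha> e \<in> A.E" using alphaE[OF eE] .
  have ae: "a \<in> grp_comp mA (\<alpha> e)" unfolding bc(1) e_def using alpha_hom[OF S.rid S.rid] A.gc_mult[OF t(2) v(2)] by simp
  have et: "e \<cdot> (t \<cdot> S.iv t) = e" unfolding e_def
    using S.idem_comm[OF S.rid[of t] S.rid[of v]] S.idem_sq[OF S.rid[of t]] by (metis S.assoc)
  have ev: "e \<cdot> (v \<cdot> S.iv v) = e" unfolding e_def
    using S.idem_sq[OF S.rid[of v]] by (metis S.assoc)
  define s where "s = S.iv t \<cdot> e"
  have sx: "s \<in> x" unfolding s_def using S.GS_closed[OF x inv_class[OF x t(1)] S.sigma_idr[OF eE]] .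
  have ss: "S.iv s \<cdot> s = e"
  proof -
    have "S.iv s \<cdot> s = e \<cdot> (t \<cdot> S.iv t) \<cdot> e" unfolding s_def using S.idem_inv[OF eE] by (simp add: S.inv_mult S.assoc)
    thus ?thesis using et S.idem_sq[OF eE] by simp
  qed
  define v0 where "v0 = e \<cdot> v"
  have v0y: "v0 \<in> y" unfolding v0_def using S.GS_closed[OF y v(1) S.sigma_idl[OF eE]] .
  have vv: "v0 \<cdot> S.iv v0 = e" unfolding v0_def using S.idl_dom[OF eE ev] .
  have ssv: "s \<cdot> S.iv s = s \<cdot> e \<cdot> S.iv s"
  proof -
    have "s \<cdot> S.iv s = s \<cdot> (S.iv s \<cdot> s) \<cdot> S.iv s" by (simp add: S.assoc)
    thus ?thesis using ss by simp
  qed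
  have tmul: "s \<cdot> v0 \<in> GS_mult mS x y"
  proof -
    have "(SOME s. s \<in> x, s) \<in> min_group_cong mS" using S.GS_rep[OF x] sx S.sclass_mem by metis
    moreover have "(SOME s. s \<in> y, v0) \<in> min_group_cong mS" using S.GS_rep[OF y] v0y S.sclass_mem by metis
    ultimately show ?thesis unfolding GS_mult_def S.sclass_mem by (rule S.sigma_cong)
  qed
  have tt: "s \<cdot> v0 \<cdot> S.iv (s \<cdot> v0) = s \<cdot> S.iv s"
  proof -
    have "s \<cdot> v0 \<cdot> S.iv (s \<cdot> v0) = s \<cdot> (v0 \<cdot> S.iv v0) \<cdot> S.iv s" by (simp add: S.inv_mult S.assoc)
    thus ?thesis using vv ssv by simp
  qed
  have sv0: "S.iv s \<cdot> (s \<cdot> v0) = v0"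
  proof -
    have "S.iv s \<cdot> (s \<cdot> v0) = e \<cdot> (e \<cdot> v)" unfolding v0_def using ss by (metis S.assoc)
    thus ?thesis unfolding v0_def using S.idem_sq'[OF eE] by simp
  qed
  let ?P = "\<alpha> (s \<cdot> S.iv s)"
  have PE: "?P \<in> A.E" using alphaE S.rid by blast
  have PP: "?P \<odot> ?P = ?P" using A.idem_sq[OF PE] .
  have gv0: "g v0 \<in> grp_comp mA (\<alpha> e)" using g_gc[of v0] vv by simp
  have sely: "sel y a = v0" using sel_gc[OF y v0y] ae vv by simp
  define a1 where "a1 = a \<odot> g v0"
  have a1: "a1 \<in> grp_comp mA (\<alpha> e)" unfolding a1_def using A.gc_mult[OF ae gv0] A.idem_sq[OF aeE] by simp
  have th1: "theta mS mA \<alpha> lam x a1 = lam s a1" using theta_eq[OF x sx] A.gc_inv_r[OF a1] ss by simp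
  have d: "lam s a1 \<in> grp_comp mA ?P" using lam_gc a1 ss by simp
  have fs: "f s v0 \<in> grp_comp mA ?P" using f_gc[of s v0] tt by simp
  have w1: "snd (wmult mS mA \<alpha> f x y) (lam s a1) = lam s a1 \<odot> f s v0"
    using wmult_snd[OF x y sx tmul, of "lam s a1" f] A.gc_inv_r[OF d] tt sv0 by simp
  have e1: "fst (eps g x) (lam s a1 \<odot> f s v0) = g s \<odot> (lam s a1 \<odot> f s v0)"
    unfolding eps_def using sel_gc[OF x sx] A.gc_mult[OF d fs] PP by simp
  have RHS: "fst (eps g x) (snd (wmult mS mA \<alpha> f x y) (theta mS mA \<alpha> lam x (snd (eps g y) a))) =
      g s \<odot> (lam s a \<odot> lam s (g v0) \<odot> f s v0)"
    using e1 w1 th1 sely unfolding eps_def a1_def by (simp add: lam_mult)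
  have la: "lam s a \<in> grp_comp mA ?P" using lam_gc ae ss by simp
  have gs: "g s \<in> grp_comp mA ?P" using g_gc .
  have d': "lam' s a \<in> grp_comp mA ?P" unfolding g_lam
    using A.gc_mult[OF A.gc_mult[OF gs la] A.gc_inv[OF gs]] PP by simp
  have th2: "theta mS mA \<alpha> lam' x a = lam' s a" using theta_eq[OF x sx] A.gc_inv_r[OF ae] ss by simp
  have fs': "f' s v0 \<in> grp_comp mA ?P" using f'_gc[of s v0] tt by simp
  have w2: "snd (wmult mS mA \<alpha> f' x y) (lam' s a) = lam' s a \<odot> f' s v0"
    using wmult_snd[OF x y sx tmul, of "lam' s a" f'] A.gc_inv_r[OF d'] tt sv0 by simp
  have tmul2: "s \<cdot> v0 \<in> GS_mult mS x y" by (rule tmul)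
  have e2: "snd (eps g (GS_mult mS x y)) (lam' s a \<odot> f' s v0) = lam' s a \<odot> f' s v0 \<odot> g (s \<cdot> v0)"
  proof -
    have "lam' s a \<odot> f' s v0 \<in> grp_comp mA (\<alpha> (s \<cdot> v0 \<cdot> S.iv (s \<cdot> v0)))"
      using A.gc_mult[OF d' fs'] PP tt by simp
    hence "sel (GS_mult mS x y) (lam' s a \<odot> f' s v0) = s \<cdot> v0" using sel_gc[OF GS_mult_GS tmul2] by simp
    thus ?thesis unfolding eps_def by simp
  qed
  have "lam' s a \<odot> f' s v0 \<odot> g (s \<cdot> v0) = g s \<odot> lam s a \<odot> A.iv (g s) \<odot> (f' s v0 \<odot> g (s \<cdot> v0))"
    unfolding g_lam by (simp add: A.assoc)
  also have "\<dots> = g s \<odot> (lam s a \<odot> (A.iv (g s) \<odot> (g s \<odot> (lam s (g v0) \<odot> f s v0))))"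
    unfolding g_f by (simp add: A.assoc)
  also have "\<dots> = g s \<odot> (lam s a \<odot> (?P \<odot> (lam s (g v0) \<odot> f s v0)))"
    using A.gc_inv_l'[OF gs] by simp
  also have "\<dots> = g s \<odot> (lam s a \<odot> lam s (g v0) \<odot> f s v0)"
    using A.gc_r'[OF la] by (simp add: A.assoc)
  finally have LHS: "snd (eps g (GS_mult mS x y)) (snd (wmult mS mA \<alpha> f' x y) (theta mS mA \<alpha> lam' x a)) =
      g s \<odot> (lam s a \<odot> lam s (g v0) \<odot> f s v0)" using e2 w2 th2 by simp
  show ?thesis using LHS RHS by simp
qed

lemma main: "equiv_tpa mA (GS mS) (GS_mult mS) (GS_inv mS)
           (Dom mS mA \<alpha>) (theta mS mA \<alpha> lam) (wmult mS mA \<alpha> f)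
           (Dom mS mA \<alpha>') (theta mS mA \<alpha>' lam') (wmult mS mA \<alpha>' f')"
  unfolding equiv_tpa_def Dom_alpha' theta_alpha' wmult_alpha'
proof (intro conjI ballI refl)
  show "\<exists>\<epsilon> \<epsilon>i. \<forall>x\<in>GS mS. is_unit_multiplier_with_inv mA (Dom mS mA \<alpha> x) (\<epsilon> x) (\<epsilon>i x) \<and>
        (\<forall>s\<in>Dom mS mA \<alpha> (GS_inv mS x). theta mS mA \<alpha> lam' x s = snd (\<epsilon>i x) (fst (\<epsilon> x) (theta mS mA \<alpha> lam x s))) \<and>
        (\<forall>y\<in>GS mS. \<forall>s\<in>setmul mA (Dom mS mA \<alpha> (GS_inv mS x)) (Dom mS mA \<alpha> y).
           snd (\<epsilon> (GS_mult mS x y)) (snd (wmult mS mA \<alpha> f' x y) (theta mS mA \<alpha> lam' x s)) =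
           fst (\<epsilon> x) (snd (wmult mS mA \<alpha> f x y) (theta mS mA \<alpha> lam x (snd (\<epsilon> y) s))))"
    apply (rule exI[of _ "eps g"], rule exI[of _ "eps (\<lambda>s. A.iv (g s))"])
    using eps_unit cond1 cond2 by blast
qed

end

theorem proposition6p13:
  fixes mS :: "'s \<Rightarrow> 's \<Rightarrow> 's" and mA :: "'a \<Rightarrow> 'a \<Rightarrow> 'a"
    and \<alpha> \<alpha>' :: "'s \<Rightarrow> 'a" and lam lam' :: "'s \<Rightarrow> 'a \<Rightarrow> 'a" and f f' :: "'s \<Rightarrow> 's \<Rightarrow> 'a"
  assumes "E_unitary mS"
    and "semilattice_of_groups mA"
    and "sieben_twisted_module mS mA \<alpha> lam f"
    and "sieben_twisted_module mS mA \<alpha>' lam' f'"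
    and "equiv_twisted_modules mS mA \<alpha> lam f \<alpha>' lam' f'"
  shows "equiv_tpa mA (GS mS) (GS_mult mS) (GS_inv mS)
           (Dom mS mA \<alpha>) (theta mS mA \<alpha> lam) (wmult mS mA \<alpha> f)
           (Dom mS mA \<alpha>') (theta mS mA \<alpha>' lam') (wmult mS mA \<alpha>' f')"
proof -
  have eu: "eunit mS" using assms(1) unfolding eunit_def eunit_axioms_def inv_sg_def E_unitary_def by blast
  have cl: "clifford mA" using assms(2) unfolding clifford_def clifford_axioms_def inv_sg_def semilattice_of_groups_def by blast
  obtain g where aeq: "\<And>e. e \<in> idems mS \<Longrightarrow> \<alpha>' e = \<alpha> e"
    and g1: "\<And>s. g s \<in> grp_comp mA (\<alpha> (mS s (sinv mS s)))"
    and g2: "\<And>s a. lam' s a = mA (mA (g s) (lam s a)) (sinv mA (g s))"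
    and g3: "\<And>s t. mA (f' s t) (g (mS s t)) = mA (mA (g s) (lam s (g t))) (f s t)"
    using assms(5) unfolding equiv_twisted_modules_def by blast
  interpret setting mS mA \<alpha> \<alpha>' lam lam' f f' g
    unfolding setting_def setting_axioms_def using eu cl assms(3,4) aeq g1 g2 g3 by blast
  show ?thesis by (rule main)
qed

end
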